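(* Let $D\ge 2$, let $\eta=\mathrm{diag}(-1,1,\dots,1)$ be the $D\times D$ Minkowski matrix, and let $M$ be an arbitrary invertible real $D\times D$ matrix. Then $M$ can be written as $M=\lambda s$ with $\lambda$ a real Lorentz matrix (i.e. $\lambda^t\eta\lambda=\eta$) and $s$ a real symmetric matrix if and only if (i) the real matrix $\eta M^t\eta M$ has a real square root, and (ii) at least one such real square root can be written as the product $\eta\, s'$ of $\eta$ with a real symmetric matrix $s'$.
   Context: $m^t$ denotes the transpose of the matrix $m$. A square root of a matrix $A$ is a matrix $\gamma$ with $\gamma^2=A$. *)

theory Defs
  imports "HOL-Analysis.Analysis"
begin

text \<open>The Minkowski metric diag(-1,1,...,1); the distinguished (first) index is the
least element of the (well-ordered, finite) index type.\<close>
definition minkowski :: "(real, 'n::{finite,wellorder}) vec ^ ('n::{finite,wellorder})" where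
  "minkowski = (\<chi> i j. if i = j then (if i = (LEAST k. True) then -1 else 1) else 0)"

definition lorentz_matrix :: "(real, 'n::{finite,wellorder}) vec ^ ('n::{finite,wellorder}) \<Rightarrow> bool" where
  "lorentz_matrix L \<longleftrightarrow> transpose L ** minkowski ** L = minkowski"

definition symmetric_matrix :: "real^'n^'n \<Rightarrow> bool" where
  "symmetric_matrix S \<longleftrightarrow> transpose S = S"

end

theory Submission
  imports Defs
begin

lemma mink_sq: "(minkowski :: (real, 'n::{finite,wellorder}) vec ^ ('n::{finite,wellorder})) ** minkowski = mat 1"
proof -
  define d :: "'n \<Rightarrow> real" where "d i = (if i = (LEAST k. True) then -1 else 1)" for i
  have m: "(minkowski :: (real, 'n::{finite,wellorder}) vec ^ ('n::{finite,wellorder})) = (\<chi> i j. if i = j then d i else 0)"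
    unfolding minkowski_def d_def by simp
  have dd: "d i * d i = 1" for i unfolding d_def by simp
  show ?thesis unfolding m
    by (simp add: matrix_matrix_mult_def mat_def vec_eq_iff if_distrib[of "\<lambda>x. x * _"] sum.delta dd cong: if_cong)
qed

lemma mink_tr: "transpose (minkowski :: (real, 'n::{finite,wellorder}) vec ^ ('n::{finite,wellorder})) = minkowski"
  unfolding minkowski_def transpose_def by (simp add: vec_eq_iff)

theorem proposition1:
  fixes M :: "(real, 'n::{finite,wellorder}) vec ^ ('n::{finite,wellorder})"
  assumes "CARD('n) \<ge> 2"
    and "invertible M"
  shows "(\<exists>L S. lorentz_matrix L \<and> symmetric_matrix S \<and> M = L ** S) \<longleftrightarrow>
         (\<exists>\<gamma>. \<gamma> ** \<gamma> = minkowski ** transpose M ** minkowski ** M) \<and>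
         (\<exists>\<gamma> S'. \<gamma> ** \<gamma> = minkowski ** transpose M ** minkowski ** M \<and>
                  symmetric_matrix S' \<and> \<gamma> = minkowski ** S')"
proof
  let ?e = "minkowski :: (real, 'n::{finite,wellorder}) vec ^ ('n::{finite,wellorder})"
  assume "\<exists>L S. lorentz_matrix L \<and> symmetric_matrix S \<and> M = L ** S"
  then obtain L S where L: "transpose L ** ?e ** L = ?e" and S: "transpose S = S" and M: "M = L ** S"
    unfolding lorentz_matrix_def symmetric_matrix_def by blast
  have "?e ** transpose M ** ?e ** M = ?e ** S ** (transpose L ** ?e ** L) ** S"
    by (simp add: M matrix_transpose_mul S matrix_mul_assoc)
  also have "\<dots> = (?e ** S) ** (?e ** S)" by (simp add: L matrix_mul_assoc)
  finally have "(?e ** S) ** (?e ** S) = ?e ** transpose M ** ?e ** M" by simp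
  then show "(\<exists>\<gamma>. \<gamma> ** \<gamma> = minkowski ** transpose M ** minkowski ** M) \<and>
         (\<exists>\<gamma> S'. \<gamma> ** \<gamma> = minkowski ** transpose M ** minkowski ** M \<and>
                  symmetric_matrix S' \<and> \<gamma> = minkowski ** S')"
    using S unfolding symmetric_matrix_def by blast
next
  let ?e = "minkowski :: (real, 'n::{finite,wellorder}) vec ^ ('n::{finite,wellorder})"
  assume "(\<exists>\<gamma>. \<gamma> ** \<gamma> = minkowski ** transpose M ** minkowski ** M) \<and>
         (\<exists>\<gamma> S'. \<gamma> ** \<gamma> = minkowski ** transpose M ** minkowski ** M \<and>
                  symmetric_matrix S' \<and> \<gamma> = minkowski ** S')"
  then obtain S where g: "(?e ** S) ** (?e ** S) = ?e ** transpose M ** ?e ** M" and S: "transpose S = S"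
    unfolding symmetric_matrix_def by blast
  have "?e ** ((?e ** S) ** (?e ** S)) = ?e ** (?e ** transpose M ** ?e ** M)" using g by simp
  hence SS: "S ** ?e ** S = transpose M ** ?e ** M"
    by (simp only: matrix_mul_assoc mink_sq matrix_mul_lid)
  have ei: "invertible ?e" using mink_sq invertible_def by blast
  have "invertible (transpose M ** ?e ** M)"
    by (intro invertible_mult transpose_invertible ei assms(2))
  hence "invertible (S ** ?e ** S)" using SS by simp
  then obtain B where "B ** (S ** ?e ** S) = mat 1" using invertible_left_inverse by blast
  hence KS: "(B ** S ** ?e) ** S = mat 1" by (simp add: matrix_mul_assoc)
  define K where "K = B ** S ** ?e"
  have KS: "K ** S = mat 1" using KS K_def by simp
  hence SK: "S ** K = mat 1" using matrix_left_right_inverse by blast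
  have KtS: "transpose K ** S = mat 1"
    using arg_cong[OF SK, of transpose] by (simp add: matrix_transpose_mul S transpose_mat)
  define L where "L = M ** K"
  have "M = L ** S" by (simp add: L_def matrix_mul_assoc[symmetric] KS)
  moreover have "transpose L ** ?e ** L = ?e"
  proof -
    have "transpose L ** ?e ** L = transpose K ** (transpose M ** ?e ** M) ** K"
      by (simp add: L_def matrix_transpose_mul matrix_mul_assoc)
    also have "\<dots> = (transpose K ** S) ** ?e ** (S ** K)"
      by (simp add: SS[symmetric] matrix_mul_assoc)
    also have "\<dots> = ?e" by (simp add: KtS SK)
    finally show ?thesis .
  qed
  ultimately show "\<exists>L S. lorentz_matrix L \<and> symmetric_matrix S \<and> M = L ** S"
    using S unfolding lorentz_matrix_def symmetric_matrix_def by blast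
qed

end
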